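(* Let $\mathcal S \subseteq U(4)$ be a set of two-qubit unitaries with the following property: for any $G_1,G_2,G_3 \in \mathcal S$ there exist $G_4,G_5,G_6\in\mathcal S$ with $$G_1^{(1)} G_2^{(2)} G_3^{(1)} = G_4^{(2)} G_5^{(1)} G_6^{(2)}$$ as operators on $(\mathbb C^2)^{\otimes 3}$, and conversely, for any $G_4,G_5,G_6\in\mathcal S$ there exist $G_1,G_2,G_3\in\mathcal S$ with the same equality. Then for any $A_1,\dots,A_6 \in \mathcal S$ there exist $B_1,\dots,B_6\in\mathcal S$ such that, as operators on $(\mathbb C^2)^{\otimes 4}$, $$A_6^{(2)}\,A_5^{(1)}A_4^{(3)}\,A_3^{(2)}\,A_2^{(1)}A_1^{(3)} \;=\; B_6^{(1)}B_5^{(3)}\,B_4^{(2)}\,B_3^{(1)}B_2^{(3)}\,B_1^{(2)}.$$ (In circuit language, read left to right in time: a four-qubit circuit whose four layers are {gates on qubits (1,2) and (3,4)}, {gate on (2,3)}, {gates on (1,2) and (3,4)}, {gate on (2,3)} equals a circuit with layers {gate on (2,3)}, {gates on (1,2) and (3,4)}, {gate on (2,3)}, {gates on (1,2) and (3,4)}, with gates from $\mathcal S$.)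
   Context: For a two-qubit unitary $G\in U(4)$ and a register of $n$ qubits, $G^{(i)}$ denotes $I_{2^{i-1}} \otimes G \otimes I_{2^{n-i-1}}$, i.e. $G$ acting on the adjacent qubits $i$ and $i+1$ and the identity elsewhere. Operator products act right to left (the rightmost factor is applied first). *)

theory Defs
  imports Complex_Main "Jordan_Normal_Form.Matrix"
begin

definition cadj :: "complex mat \<Rightarrow> complex mat" where
  "cadj A = mat (dim_col A) (dim_row A) (\<lambda>(i,j). cnj (A $$ (j,i)))"

definition U4 :: "complex mat set" where
  "U4 = {G. G \<in> carrier_mat 4 4 \<and> G * cadj G = 1\<^sub>m 4}"

text \<open>G^(i) on n qubits: I_{2^(i-1)} \<otimes> G \<otimes> I_{2^(n-i-1)} (Kronecker product,
  standard ordering: row index r = a * (4*m) + g * m + b with m = 2^(n-i-1)).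
  Qubits are numbered 1..n.\<close>
definition embed2 :: "nat \<Rightarrow> nat \<Rightarrow> complex mat \<Rightarrow> complex mat" where
  "embed2 n i G = (let m = 2 ^ (n - i - 1) in
     mat (2 ^ n) (2 ^ n) (\<lambda>(r, c).
       if r div (4 * m) = c div (4 * m) \<and> r mod m = c mod m
       then G $$ ((r div m) mod 4, (c div m) mod 4) else 0))"

end

theory Submission
  imports Defs
begin


lemma sum_split_mult: "(\<Sum>k<m*n. f k) = (\<Sum>a<m. \<Sum>b<n. f (a*n+b::nat) :: 'a::comm_monoid_add)"
proof -
  have "\<And>a. sum f {a*n..<a*n+n} = (\<Sum>b<n. f (a*n+b))"
    using sum.shift_bounds_nat_ivl[of f 0 "a*n" n for a]
    by (simp add: atLeast0LessThan add.commute)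
  then show ?thesis using sum.nat_group[of f n m] by simp
qed


definition Lft :: "nat \<Rightarrow> complex mat \<Rightarrow> complex mat" where
  "Lft n M = mat (2*n) (2*n) (\<lambda>(r,c). if r mod 2 = c mod 2 then M $$ (r div 2, c div 2) else 0)"
definition Rgt :: "nat \<Rightarrow> complex mat \<Rightarrow> complex mat" where
  "Rgt n M = mat (2*n) (2*n) (\<lambda>(r,c). if r div n = c div n then M $$ (r mod n, c mod n) else 0)"

lemma Lft_mult:
  assumes "A \<in> carrier_mat n n" "B \<in> carrier_mat n n"
  shows "Lft n (A*B) = Lft n A * Lft n B"
proof (rule eq_matI)
  fix i j assume ij: "i < dim_row (Lft n A * Lft n B)" "j < dim_col (Lft n A * Lft n B)"
  hence i: "i < 2*n" and j: "j < 2*n" by (auto simp: Lft_def)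
  have "(Lft n A * Lft n B) $$ (i,j) = (\<Sum>k<n*2. Lft n A $$ (i,k) * Lft n B $$ (k,j))"
    using i j by (simp add: scalar_prod_def atLeast0LessThan Lft_def mult.commute)
  also have "\<dots> = (\<Sum>a<n. \<Sum>b<2. Lft n A $$ (i,a*2+b) * Lft n B $$ (a*2+b,j))"
    by (rule sum_split_mult)
  also have "\<dots> = (\<Sum>a<n. if i mod 2 = j mod 2 then A $$ (i div 2, a) * B $$ (a, j div 2) else 0)"
  proof (rule sum.cong[OF refl])
    fix a assume a: "a \<in> {..<n}"
    have lt: "a*2 < 2*n" "a*2+1 < 2*n" using a by auto
    have s2: "\<And>g::nat\<Rightarrow>complex. (\<Sum>b<2. g b) = g 0 + g 1" by (simp add: numeral_2_eq_2)
    have m: "(a*2) mod 2 = 0" "(a*2+1) mod 2 = 1" "(a*2) div 2 = a" "(a*2+1) div 2 = a" by presburger+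
    have "i mod 2 = 0 \<or> i mod 2 = 1" "j mod 2 = 0 \<or> j mod 2 = 1" by auto
    then show "(\<Sum>b<2. Lft n A $$ (i,a*2+b) * Lft n B $$ (a*2+b,j)) = (if i mod 2 = j mod 2 then A $$ (i div 2, a) * B $$ (a, j div 2) else 0)"
      unfolding s2 using i j lt by (auto simp: Lft_def m)
  qed
  also have "\<dots> = Lft n (A*B) $$ (i,j)"
    using i j assms by (auto simp: Lft_def scalar_prod_def atLeast0LessThan)
  finally show "Lft n (A*B) $$ (i,j) = (Lft n A * Lft n B) $$ (i,j)" by simp
qed (auto simp: Lft_def)



lemma Rgt_mult:
  assumes "A \<in> carrier_mat n n" "B \<in> carrier_mat n n"
  shows "Rgt n (A*B) = Rgt n A * Rgt n B"
proof (rule eq_matI)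
  fix i j assume ij: "i < dim_row (Rgt n A * Rgt n B)" "j < dim_col (Rgt n A * Rgt n B)"
  hence i: "i < 2*n" and j: "j < 2*n" by (auto simp: Rgt_def)
  have "(Rgt n A * Rgt n B) $$ (i,j) = (\<Sum>k<2*n. Rgt n A $$ (i,k) * Rgt n B $$ (k,j))"
    using i j by (simp add: scalar_prod_def atLeast0LessThan Rgt_def)
  also have "\<dots> = (\<Sum>a<2. \<Sum>b<n. Rgt n A $$ (i,a*n+b) * Rgt n B $$ (a*n+b,j))"
    by (rule sum_split_mult)
  also have "\<dots> = (\<Sum>b<n. Rgt n A $$ (i,b) * Rgt n B $$ (b,j)) + (\<Sum>b<n. Rgt n A $$ (i,n+b) * Rgt n B $$ (n+b,j))"
    by (simp add: numeral_2_eq_2)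
  also have "\<dots> = (\<Sum>b<n. Rgt n A $$ (i,b) * Rgt n B $$ (b,j) + Rgt n A $$ (i,n+b) * Rgt n B $$ (n+b,j))"
    by (simp add: sum.distrib)
  also have "\<dots> = (\<Sum>b<n. if i div n = j div n then A $$ (i mod n, b) * B $$ (b, j mod n) else 0)"
  proof (rule sum.cong[OF refl])
    fix b assume b: "b \<in> {..<n}"
    have "i div n < 2" "j div n < 2" using i j by (metis less_mult_imp_div_less mult.commute)+
    then have d: "i div n = 0 \<or> i div n = 1" "j div n = 0 \<or> j div n = 1" by linarith+
    have m: "b div n = 0" "b mod n = b" "(n+b) div n = 1" "(n+b) mod n = b" using b by auto
    have lt: "b < 2*n" "n+b < 2*n" using b by auto
    show "Rgt n A $$ (i,b) * Rgt n B $$ (b,j) + Rgt n A $$ (i,n+b) * Rgt n B $$ (n+b,j)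
       = (if i div n = j div n then A $$ (i mod n, b) * B $$ (b, j mod n) else 0)"
      using i j d lt by (auto simp: Rgt_def m)
  qed
  also have "\<dots> = Rgt n (A*B) $$ (i,j)"
    using i j assms by (auto simp: Rgt_def scalar_prod_def atLeast0LessThan)
  finally show "Rgt n (A*B) $$ (i,j) = (Rgt n A * Rgt n B) $$ (i,j)" by simp
qed (auto simp: Rgt_def)


lemma two_digit: "(x::nat) < 2 \<Longrightarrow> y < 2 \<Longrightarrow> (2*a+x = 2*b+y) = (a=b \<and> x=y)"
proof -
  assume "x < 2" "y < 2"
  then have "x = 0 \<or> x = 1" "y = 0 \<or> y = 1" by auto
  then show ?thesis by auto presburger+
qed
lemma ar1: "((r::nat) mod 4 = c mod 4) = (r mod 2 = c mod 2 \<and> r div 2 mod 2 = c div 2 mod 2)"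
proof -
  have a: "r mod 4 = 2*(r div 2 mod 2) + r mod 2" "c mod 4 = 2*(c div 2 mod 2) + c mod 2"
    using mod_mult2_eq[of r 2 2] mod_mult2_eq[of c 2 2] by simp_all
  have "r mod 2 < 2" "c mod 2 < 2" by simp_all
  then show ?thesis unfolding a two_digit[OF \<open>r mod 2 < 2\<close> \<open>c mod 2 < 2\<close>] by blast
qed
lemma ar2: "((r::nat) div 4 = c div 4) = (r div 8 = c div 8 \<and> r mod 8 div 4 = c mod 8 div 4)"
proof -
  have e: "r div 4 = 2 * (r div 8) + r mod 8 div 4" for r :: nat
  proof -
    have "r div 4 = (r mod 8 + (r div 8 * 2) * 4) div 4" by (metis mod_div_mult_eq add.commute mult.assoc num_double numeral_times_numeral)
    also have "\<dots> = r div 8 * 2 + r mod 8 div 4" by (simp only: div_mult_self2[of 4])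
    finally show ?thesis by simp
  qed
  have "r mod 8 div 4 < 2" "c mod 8 div 4 < 2" by simp_all
  then show ?thesis unfolding e[of r] e[of c] by (rule two_digit)
qed

lemma mm: "(i::nat) mod 8 mod 2 = i mod 2" "i mod 8 mod 4 = i mod 4" "i mod 8 div 2 mod 4 = i div 2 mod 4"
proof -
  show "i mod 8 mod 2 = i mod 2" "i mod 8 mod 4 = i mod 4" by (simp_all add: mod_mod_cancel)
  have "i mod (2*4) = 2*(i div 2 mod 4) + i mod 2" by (rule mod_mult2_eq)
  then have "i mod 8 div 2 = i div 2 mod 4" by simp
  then show "i mod 8 div 2 mod 4 = i div 2 mod 4" by simp
qed
lemma R31: "Rgt 8 (embed2 3 1 G) = embed2 4 2 G"
  apply (rule eq_matI) apply (simp_all add: Rgt_def embed2_def Let_def mm)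
  done
lemma R32: "Rgt 8 (embed2 3 2 G) = embed2 4 3 G"
  apply (rule eq_matI) apply (simp_all add: Rgt_def embed2_def Let_def mm)
  using ar2 by blast

lemma sum16: "(\<Sum>k<16. f k) = (\<Sum>a<4. \<Sum>b<4. f (a*4+b::nat) :: complex)"
  using sum_split_mult[of f 4 4] by simp

lemma e41_entry: "i < 16 \<Longrightarrow> k < 16 \<Longrightarrow> embed2 4 1 G $$ (i,k) = (if i mod 4 = k mod 4 then G $$ (i div 4 mod 4, k div 4 mod 4) else 0)"
  by (simp add: embed2_def)
lemma e41_entry': "i < 16 \<Longrightarrow> k < 16 \<Longrightarrow> embed2 4 (Suc 0) G $$ (i,k) = (if i mod 4 = k mod 4 then G $$ (i div 4 mod 4, k div 4 mod 4) else 0)"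
  using e41_entry by simp
lemma e43_entry: "i < 16 \<Longrightarrow> k < 16 \<Longrightarrow> embed2 4 3 G $$ (i,k) = (if i div 4 = k div 4 then G $$ (i mod 4, k mod 4) else 0)"
  by (simp add: embed2_def)

lemma ab: "a < 4 \<Longrightarrow> b < 4 \<Longrightarrow> (a*4+b::nat) mod 4 = b \<and> (a*4+b) div 4 = a \<and> a*4+b < 16"
  by auto

lemma dsum: assumes "p < 4" "q < 4"
  shows "(\<Sum>a<(4::nat). \<Sum>b<(4::nat). if a = p then if b = q then X else 0 else 0) = (X::complex)"
proof -
  have "\<And>a. (\<Sum>b<(4::nat). if a = p then if b = q then X else 0 else 0) = (if a = p then X else 0)"
    using assms by (case_tac "a = p") simp_all
  then show ?thesis using assms by simp
qed

lemma comm13: "embed2 4 1 G * embed2 4 3 H = embed2 4 3 H * embed2 4 1 G"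
proof (rule eq_matI)
  fix i j assume "i < dim_row (embed2 4 3 H * embed2 4 1 G)" "j < dim_col (embed2 4 3 H * embed2 4 1 G)"
  then have i: "i < 16" and j: "j < 16" by (auto simp: embed2_def)
  have im: "i mod 4 < 4" "j div 4 < 4" "i div 4 < 4" "j mod 4 < 4" using i j by auto
  have "(embed2 4 1 G * embed2 4 3 H) $$ (i,j) = (\<Sum>k<16. embed2 4 1 G $$ (i,k) * embed2 4 3 H $$ (k,j))"
    using i j by (simp add: scalar_prod_def atLeast0LessThan embed2_def)
  also have "\<dots> = (\<Sum>a<4. \<Sum>b<4. if a = j div 4 then if b = i mod 4 then G $$ (i div 4 mod 4, j div 4 mod 4) * H $$ (i mod 4, j mod 4) else 0 else 0)"
    unfolding sum16 using i j
    by (intro sum.cong refl) (auto simp: e41_entry e41_entry' e43_entry ab)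
  also have "\<dots> = G $$ (i div 4 mod 4, j div 4 mod 4) * H $$ (i mod 4, j mod 4)"
    by (rule dsum) (use im in simp_all)
  finally have 1: "(embed2 4 1 G * embed2 4 3 H) $$ (i,j) = G $$ (i div 4 mod 4, j div 4 mod 4) * H $$ (i mod 4, j mod 4)" .
  have im2: "i div 4 < 4" "j mod 4 < 4" using im by auto
  have "(embed2 4 3 H * embed2 4 1 G) $$ (i,j) = (\<Sum>k<16. embed2 4 3 H $$ (i,k) * embed2 4 1 G $$ (k,j))"
    using i j by (simp add: scalar_prod_def atLeast0LessThan embed2_def)
  also have "\<dots> = (\<Sum>a<4. \<Sum>b<4. if a = i div 4 then if b = j mod 4 then G $$ (i div 4 mod 4, j div 4 mod 4) * H $$ (i mod 4, j mod 4) else 0 else 0)"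
    unfolding sum16 using i j
    by (intro sum.cong refl) (auto simp: e41_entry e41_entry' e43_entry ab)
  also have "\<dots> = G $$ (i div 4 mod 4, j div 4 mod 4) * H $$ (i mod 4, j mod 4)"
    by (rule dsum) (use im in simp_all)
  finally show "(embed2 4 1 G * embed2 4 3 H) $$ (i,j) = (embed2 4 3 H * embed2 4 1 G) $$ (i,j)" using 1 by simp
qed (auto simp: embed2_def)

lemma emb3_carrier[simp]: "embed2 3 i G \<in> carrier_mat 8 8"
  by (simp add: embed2_def Let_def)
lemma emb4_carrier[simp]: "embed2 4 i G \<in> carrier_mat 16 16"
  by (simp add: embed2_def Let_def)

lemma dd: "(i::nat) div 2 div 2 = i div 4" "i div 2 div 4 = i div 8" "i div 4 div 2 = i div 8"
  by (simp_all add: div_mult2_eq[symmetric])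
lemma L31: "Lft 8 (embed2 3 1 G) = embed2 4 1 G"
  by (rule eq_matI) (auto simp: Lft_def embed2_def Let_def dd ar1)
lemma L32: "Lft 8 (embed2 3 2 G) = embed2 4 2 G"
  by (rule eq_matI) (auto simp: Lft_def embed2_def Let_def dd)

lemma Lft3: assumes a: "a \<in> carrier_mat 8 8" and b: "b \<in> carrier_mat 8 8" and c: "c \<in> carrier_mat 8 8"
  shows "Lft 8 (a*b*c) = Lft 8 a * Lft 8 b * Lft 8 c"
proof -
  have ab: "a*b \<in> carrier_mat 8 8" using a b by (rule mult_carrier_mat)
  show ?thesis by (simp only: Lft_mult[OF ab c] Lft_mult[OF a b])
qed
lemma Rgt3: assumes a: "a \<in> carrier_mat 8 8" and b: "b \<in> carrier_mat 8 8" and c: "c \<in> carrier_mat 8 8"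
  shows "Rgt 8 (a*b*c) = Rgt 8 a * Rgt 8 b * Rgt 8 c"
proof -
  have ab: "a*b \<in> carrier_mat 8 8" using a b by (rule mult_carrier_mat)
  show ?thesis by (simp only: Rgt_mult[OF ab c] Rgt_mult[OF a b])
qed

lemma liftL:
  assumes "embed2 3 1 X * embed2 3 2 Y * embed2 3 1 Z = embed2 3 2 P * embed2 3 1 Q * embed2 3 2 R"
  shows "embed2 4 1 X * embed2 4 2 Y * embed2 4 1 Z = embed2 4 2 P * embed2 4 1 Q * embed2 4 2 R"
proof -
  have "Lft 8 (embed2 3 1 X * embed2 3 2 Y * embed2 3 1 Z) = Lft 8 (embed2 3 2 P * embed2 3 1 Q * embed2 3 2 R)"
    using assms by (rule arg_cong)
  then show ?thesis
    by (simp only: Lft3[OF emb3_carrier emb3_carrier emb3_carrier] L31 L32)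
qed

lemma liftR:
  assumes "embed2 3 1 X * embed2 3 2 Y * embed2 3 1 Z = embed2 3 2 P * embed2 3 1 Q * embed2 3 2 R"
  shows "embed2 4 2 X * embed2 4 3 Y * embed2 4 2 Z = embed2 4 3 P * embed2 4 2 Q * embed2 4 3 R"
proof -
  have "Rgt 8 (embed2 3 1 X * embed2 3 2 Y * embed2 3 1 Z) = Rgt 8 (embed2 3 2 P * embed2 3 1 Q * embed2 3 2 R)"
    using assms by (rule arg_cong)
  then show ?thesis
    by (simp only: Rgt3[OF emb3_carrier emb3_carrier emb3_carrier] R31 R32)
qed

lemma mc16[simp]: "A \<in> carrier_mat 16 16 \<Longrightarrow> B \<in> carrier_mat 16 16 \<Longrightarrow> A*B \<in> carrier_mat 16 16"
  by (rule mult_carrier_mat)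
lemma assoc16[simp]: "A \<in> carrier_mat 16 16 \<Longrightarrow> B \<in> carrier_mat 16 16 \<Longrightarrow> C \<in> carrier_mat 16 16
   \<Longrightarrow> A*B*C = A*(B*C)"
  by (rule assoc_mult_mat)

lemma tail3:
  assumes h: "X*Y*Z = P*Q*R"
    and c: "X \<in> carrier_mat 16 16" "Y \<in> carrier_mat 16 16" "Z \<in> carrier_mat 16 16"
      "P \<in> carrier_mat 16 16" "Q \<in> carrier_mat 16 16" "R \<in> carrier_mat 16 16" "T \<in> carrier_mat 16 16"
  shows "X*(Y*(Z*T)) = P*(Q*(R*T))"
proof -
  have "X*(Y*(Z*T)) = X*Y*Z*T" using c by simp
  also have "\<dots> = P*Q*R*T" using h by simp
  also have "\<dots> = P*(Q*(R*T))" using c by simp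
  finally show ?thesis .
qed

lemma comm13T: "T \<in> carrier_mat 16 16 \<Longrightarrow>
   embed2 4 1 G * (embed2 4 3 H * T) = embed2 4 3 H * (embed2 4 1 G * T)"
proof -
  assume T: "T \<in> carrier_mat 16 16"
  have "embed2 4 1 G * (embed2 4 3 H * T) = embed2 4 1 G * embed2 4 3 H * T"
    using T by (simp del: assoc_mult_mat)
  also have "\<dots> = embed2 4 3 H * embed2 4 1 G * T" by (simp only: comm13)
  also have "\<dots> = embed2 4 3 H * (embed2 4 1 G * T)" using T by (simp del: assoc_mult_mat)
  finally show ?thesis .
qed

theorem mainTheorem2:
  fixes S :: "complex mat set"
  assumes SU: "S \<subseteq> U4"
    and fwd: "\<forall>G1\<in>S. \<forall>G2\<in>S. \<forall>G3\<in>S. \<exists>G4\<in>S. \<exists>G5\<in>S. \<exists>G6\<in>S.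
       embed2 3 1 G1 * embed2 3 2 G2 * embed2 3 1 G3 = embed2 3 2 G4 * embed2 3 1 G5 * embed2 3 2 G6"
    and bwd: "\<forall>G4\<in>S. \<forall>G5\<in>S. \<forall>G6\<in>S. \<exists>G1\<in>S. \<exists>G2\<in>S. \<exists>G3\<in>S.
       embed2 3 1 G1 * embed2 3 2 G2 * embed2 3 1 G3 = embed2 3 2 G4 * embed2 3 1 G5 * embed2 3 2 G6"
    and A: "A1 \<in> S" "A2 \<in> S" "A3 \<in> S" "A4 \<in> S" "A5 \<in> S" "A6 \<in> S"
  shows "\<exists>B1\<in>S. \<exists>B2\<in>S. \<exists>B3\<in>S. \<exists>B4\<in>S. \<exists>B5\<in>S. \<exists>B6\<in>S.
     embed2 4 2 A6 * embed2 4 1 A5 * embed2 4 3 A4 * embed2 4 2 A3 * embed2 4 1 A2 * embed2 4 3 A1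
   = embed2 4 1 B6 * embed2 4 3 B5 * embed2 4 2 B4 * embed2 4 1 B3 * embed2 4 3 B2 * embed2 4 2 B1"
proof -
  obtain C4 C5 C6 where C: "C4 \<in> S" "C5 \<in> S" "C6 \<in> S" and
    h1: "embed2 3 1 A5 * embed2 3 2 A3 * embed2 3 1 A2 = embed2 3 2 C4 * embed2 3 1 C5 * embed2 3 2 C6"
    using fwd A by blast
  obtain D4 D5 D6 where D: "D4 \<in> S" "D5 \<in> S" "D6 \<in> S" and
    h2: "embed2 3 1 A6 * embed2 3 2 A4 * embed2 3 1 C4 = embed2 3 2 D4 * embed2 3 1 D5 * embed2 3 2 D6"
    using fwd A C by blast
  obtain E1 E2 E3 where E: "E1 \<in> S" "E2 \<in> S" "E3 \<in> S" and
    h3: "embed2 3 1 E1 * embed2 3 2 E2 * embed2 3 1 E3 = embed2 3 2 D6 * embed2 3 1 C6 * embed2 3 2 A1"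
    using bwd A C D by blast
  obtain F1 F2 F3 where F: "F1 \<in> S" "F2 \<in> S" "F3 \<in> S" and
    h4: "embed2 3 1 F1 * embed2 3 2 F2 * embed2 3 1 F3 = embed2 3 2 D5 * embed2 3 1 C5 * embed2 3 2 E1"
    using bwd C D E by blast
  note g1 = liftL[OF h1] and g2 = liftR[OF h2] and g3 = liftR[OF h3] and g4 = liftL[OF h4]
  have g3': "embed2 4 3 D6 * (embed2 4 2 C6 * embed2 4 3 A1) = embed2 4 2 E1 * (embed2 4 3 E2 * embed2 4 2 E3)"
  proof -
    have "embed2 4 3 D6 * (embed2 4 2 C6 * embed2 4 3 A1) = embed2 4 3 D6 * embed2 4 2 C6 * embed2 4 3 A1"
      by (simp del: assoc_mult_mat)
    also have "\<dots> = embed2 4 2 E1 * embed2 4 3 E2 * embed2 4 2 E3" using g3 by simp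
    also have "\<dots> = embed2 4 2 E1 * (embed2 4 3 E2 * embed2 4 2 E3)" by (simp del: assoc_mult_mat)
    finally show ?thesis .
  qed
  have "embed2 4 2 A6 * embed2 4 1 A5 * embed2 4 3 A4 * embed2 4 2 A3 * embed2 4 1 A2 * embed2 4 3 A1
      = embed2 4 2 A6 * (embed2 4 1 A5 * (embed2 4 3 A4 * (embed2 4 2 A3 * (embed2 4 1 A2 * embed2 4 3 A1))))"
    by (simp del: assoc_mult_mat)
  also have "\<dots> = embed2 4 2 A6 * (embed2 4 3 A4 * (embed2 4 1 A5 * (embed2 4 2 A3 * (embed2 4 1 A2 * embed2 4 3 A1))))"
    by (subst comm13T) auto
  also have "\<dots> = embed2 4 2 A6 * (embed2 4 3 A4 * (embed2 4 2 C4 * (embed2 4 1 C5 * (embed2 4 2 C6 * embed2 4 3 A1))))"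
    by (subst tail3[OF g1]) auto
  also have "\<dots> = embed2 4 3 D4 * (embed2 4 2 D5 * (embed2 4 3 D6 * (embed2 4 1 C5 * (embed2 4 2 C6 * embed2 4 3 A1))))"
    by (subst tail3[OF g2]) auto
  also have "\<dots> = embed2 4 3 D4 * (embed2 4 2 D5 * (embed2 4 1 C5 * (embed2 4 3 D6 * (embed2 4 2 C6 * embed2 4 3 A1))))"
    by (subst comm13T[of _ C5 D6]) auto
  also have "\<dots> = embed2 4 3 D4 * (embed2 4 2 D5 * (embed2 4 1 C5 * (embed2 4 2 E1 * (embed2 4 3 E2 * embed2 4 2 E3))))"
    by (simp only: g3')
  also have "\<dots> = embed2 4 3 D4 * (embed2 4 1 F1 * (embed2 4 2 F2 * (embed2 4 1 F3 * (embed2 4 3 E2 * embed2 4 2 E3))))"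
    by (subst tail3[OF g4[symmetric]]) auto
  also have "\<dots> = embed2 4 1 F1 * (embed2 4 3 D4 * (embed2 4 2 F2 * (embed2 4 1 F3 * (embed2 4 3 E2 * embed2 4 2 E3))))"
    by (subst comm13T[of _ F1 D4]) auto
  also have "\<dots> = embed2 4 1 F1 * embed2 4 3 D4 * embed2 4 2 F2 * embed2 4 1 F3 * embed2 4 3 E2 * embed2 4 2 E3"
    by (simp del: assoc_mult_mat)
  finally show ?thesis using D E F by blast
qed

end
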